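(* Let $G$ be a finite, simple, connected plane graph of minimum degree $3$ in which no two distinct triangles (cycles of length $3$) share an edge. Let $f$ be the number of faces of $G$ and $f_3$ the number of triangular faces of $G$ (faces whose boundary is a cycle of length $3$). Then $f_3 < \tfrac{2}{3} f$.
   Context: A plane graph is a planar graph together with a fixed embedding in the plane; its faces are the connected components of the complement of the embedding in the plane (including the unbounded face). *)

theory Defs
  imports "HOL-Analysis.Analysis"
begin

definition simple_graph :: "'v set \<Rightarrow> 'v set set \<Rightarrow> bool" where
  "simple_graph V E \<longleftrightarrow> finite V \<and> (\<forall>e\<in>E. e \<subseteq> V \<and> card e = 2)"

definition adj :: "'v set set \<Rightarrow> 'v \<Rightarrow> 'v \<Rightarrow> bool" where
  "adj E u v \<longleftrightarrow> {u, v} \<in> E"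

definition graph_connected :: "'v set \<Rightarrow> 'v set set \<Rightarrow> bool" where
  "graph_connected V E \<longleftrightarrow> V \<noteq> {} \<and> (\<forall>u\<in>V. \<forall>v\<in>V. (adj E)\<^sup>*\<^sup>* u v)"

definition degree :: "'v set set \<Rightarrow> 'v \<Rightarrow> nat" where
  "degree E v = card {e\<in>E. v \<in> e}"

definition min_degree_ge :: "'v set \<Rightarrow> 'v set set \<Rightarrow> nat \<Rightarrow> bool" where
  "min_degree_ge V E k \<longleftrightarrow> (\<forall>v\<in>V. degree E v \<ge> k)"

definition is_triangle :: "'v set set \<Rightarrow> 'v set \<Rightarrow> bool" where
  "is_triangle E T \<longleftrightarrow> (\<exists>a b c. T = {a, b, c} \<and> a \<noteq> b \<and> b \<noteq> c \<and> a \<noteq> c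
      \<and> {a, b} \<in> E \<and> {b, c} \<in> E \<and> {a, c} \<in> E)"

definition no_edge_sharing_triangles :: "'v set set \<Rightarrow> bool" where
  "no_edge_sharing_triangles E \<longleftrightarrow>
     (\<forall>T1 T2. is_triangle E T1 \<and> is_triangle E T2 \<and> T1 \<noteq> T2 \<longrightarrow>
        \<not> (\<exists>e\<in>E. e \<subseteq> T1 \<and> e \<subseteq> T2))"

definition plane_embedding ::
  "'v set \<Rightarrow> 'v set set \<Rightarrow> ('v \<Rightarrow> complex) \<Rightarrow> ('v set \<Rightarrow> real \<Rightarrow> complex) \<Rightarrow> bool" where
  "plane_embedding V E pos \<gamma> \<longleftrightarrow>
     inj_on pos V \<and>
     (\<forall>e\<in>E. arc (\<gamma> e) \<and> {pathstart (\<gamma> e), pathfinish (\<gamma> e)} = pos ` e) \<and>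
     (\<forall>e\<in>E. \<forall>v\<in>V. pos v \<in> path_image (\<gamma> e) \<longrightarrow> v \<in> e) \<and>
     (\<forall>e\<in>E. \<forall>e'\<in>E. e \<noteq> e' \<longrightarrow>
        path_image (\<gamma> e) \<inter> path_image (\<gamma> e') \<subseteq> pos ` (e \<inter> e'))"

definition drawing :: "'v set \<Rightarrow> 'v set set \<Rightarrow> ('v \<Rightarrow> complex) \<Rightarrow> ('v set \<Rightarrow> real \<Rightarrow> complex) \<Rightarrow> complex set" where
  "drawing V E pos \<gamma> = pos ` V \<union> (\<Union>e\<in>E. path_image (\<gamma> e))"

definition faces :: "'v set \<Rightarrow> 'v set set \<Rightarrow> ('v \<Rightarrow> complex) \<Rightarrow> ('v set \<Rightarrow> real \<Rightarrow> complex) \<Rightarrow> complex set set" where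
  "faces V E pos \<gamma> = {connected_component_set (- drawing V E pos \<gamma>) x | x. x \<notin> drawing V E pos \<gamma>}"

definition triangular_face :: "'v set set \<Rightarrow> ('v \<Rightarrow> complex) \<Rightarrow> ('v set \<Rightarrow> real \<Rightarrow> complex) \<Rightarrow> complex set \<Rightarrow> bool" where
  "triangular_face E pos \<gamma> F \<longleftrightarrow>
     (\<exists>a b c. a \<noteq> b \<and> b \<noteq> c \<and> a \<noteq> c \<and> {a, b} \<in> E \<and> {b, c} \<in> E \<and> {a, c} \<in> E \<and>
        frontier F = path_image (\<gamma> {a, b}) \<union> path_image (\<gamma> {b, c}) \<union> path_image (\<gamma> {a, c}))"

end

theory Submission
  imports Defs
begin

lemma pendant_step:
  fixes A :: "complex set"
  assumes "compact A" "connected (- A)" "arc g" "A \<inter> path_image g = {p}"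
  shows "connected (- (A \<union> path_image g))"
proof (rule Janiszewski_connected)
  show "compact A" "closed (path_image g)" using assms by (auto simp: closed_arc_image)
  show "connected (A \<inter> path_image g)" using assms by simp
  show "connected (- A)" by fact
  show "connected (- path_image g)" using assms connected_arc_complement by fastforce
qed

lemma closing_step:
  fixes A :: "complex set"
  assumes cA: "compact A" and pA: "path_connected A" and g: "arc g"
    and Ag: "A \<inter> path_image g = {pathstart g, pathfinish g}"
    and fin: "finite (components (- A))"
  shows "finite (components (- (A \<union> path_image g)))
     \<and> card (components (- A)) + 1 \<le> card (components (- (A \<union> path_image g)))"
proof -
  define p where "p = pathstart g"
  define q where "q = pathfinish g"
  define B where "B = A \<union> path_image g"
  have pq: "p \<noteq> q" using g arc_distinct_ends p_def q_def by metis
  have pA': "p \<in> A" "q \<in> A" using Ag p_def q_def by auto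
  obtain d where d: "arc d" "path_image d \<subseteq> A" "pathstart d = p" "pathfinish d = q"
    using pA pA' pq path_connected_arcwise by metis
  define c where "c = g +++ reversepath d"
  have sc: "simple_path c" unfolding c_def
    using simple_path_join_loop_eq[of "reversepath d" g] g d Ag p_def q_def
    by (auto simp: arc_reversepath)
  have cl: "pathfinish c = pathstart c" using d by (simp add: c_def p_def q_def)
  define J where "J = path_image c"
  have J: "J = path_image g \<union> path_image d" unfolding J_def c_def
    using d by (simp add: path_image_join q_def)
  note Jo = Jordan_inside_outside[OF sc cl, folded J_def]
  have JB: "J \<subseteq> B" using J d B_def by auto
  have AJ: "A \<inter> J = path_image d"
  proof -
    have "A \<inter> path_image g \<subseteq> path_image d" using Ag d(3,4) p_def q_def
      by (metis pathfinish_in_path_image pathstart_in_path_image empty_subsetI insert_subset)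
    then show ?thesis using J d(2) by blast
  qed
  define m where "m = g (1/2)"
  have mg: "m \<in> path_image g - {p, q}"
  proof -
    have "m \<in> path_image g" unfolding m_def path_image_def by auto
    moreover have "m \<noteq> p" "m \<noteq> q" using arcD[OF g, of "1/2" 0] arcD[OF g, of "1/2" 1]
      by (auto simp: m_def p_def q_def pathstart_def pathfinish_def)
    ultimately show ?thesis by auto
  qed
  have mA: "m \<notin> A" using mg Ag p_def q_def by auto
  define C where "C = connected_component_set (- A) m"
  have openA: "open (- A)" using cA by (simp add: compact_imp_closed open_Compl)
  have oC: "open C" unfolding C_def using openA open_connected_component by blast
  have mC: "m \<in> C" unfolding C_def using mA by auto
  have gC: "path_image g - {p, q} \<subseteq> C"
    unfolding C_def
    apply (rule connected_component_maximal[OF mg])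
    using connected_simple_path_endless[OF arc_imp_simple_path[OF g]] p_def q_def apply simp
    using Ag p_def q_def by blast
  have CA: "C \<subseteq> - A" unfolding C_def by (rule connected_component_subset)
  obtain r where r: "r > 0" "ball m r \<subseteq> C" using oC mC open_contains_ball by blast
  have mJ: "m \<in> J" using mg J by auto
  obtain x0 where x0: "x0 \<in> inside J" "dist x0 m < r"
    using Jo mJ r(1) by (metis closure_approachable frontier_def DiffD1)
  obtain y0 where y0: "y0 \<in> outside J" "dist y0 m < r"
    using Jo mJ r(1) by (metis closure_approachable frontier_def DiffD1)
  have x0C: "x0 \<in> C" using x0 r by (auto simp: dist_commute)
  have y0C: "y0 \<in> C" using y0 r by (auto simp: dist_commute)
  have BA: "- B \<subseteq> - A" unfolding B_def by auto
  have clin: "closure (inside J) = inside J \<union> J" using Jo by (simp add: closure_Un_frontier)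
  have clout: "closure (outside J) = outside J \<union> J" using Jo by (simp add: closure_Un_frontier)
  have inJ: "inside J \<inter> J = {}" and outJ: "outside J \<inter> J = {}"
    using Jo by blast+
  have ccA: "connected_component (- A) z w" if "z \<in> C" "w \<in> C" for z w
    using that unfolding C_def
    by (metis connected_component_eq mem_Collect_eq)
  have Kin: "connected_component (- B) z x0" if z: "z \<in> C" "z \<in> inside J" for z
  proof -
    define S where "S = A \<inter> closure (inside J)"
    define T where "T = closure (outside J)"
    have "connected_component (- (S \<union> T)) z x0"
    proof (rule Janiszewski)
      show "compact S" unfolding S_def using cA by (simp add: compact_Int_closed)
      show "closed T" unfolding T_def by simp
      have "S \<inter> T = A \<inter> J" unfolding S_def T_def clin clout using Jo by blast
      then show "connected (S \<inter> T)" using AJ d(1) by (simp add: connected_arc_image)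
      show "connected_component (- S) z x0"
        by (rule connected_component_of_subset[OF ccA[OF z(1) x0C]]) (auto simp: S_def)
      have "- T = inside J" unfolding T_def clout using Jo by blast
      then show "connected_component (- T) z x0"
        using Jo z(2) x0(1) by (metis connected_component_def order_refl)
    qed
    moreover have "- (S \<union> T) \<subseteq> - B"
      unfolding S_def T_def clin clout B_def using J Jo by blast
    ultimately show ?thesis by (rule connected_component_of_subset)
  qed
  have Kout: "connected_component (- B) z y0" if z: "z \<in> C" "z \<in> outside J" for z
  proof -
    define S where "S = A \<inter> closure (outside J)"
    define T where "T = closure (inside J)"
    have "connected_component (- (S \<union> T)) z y0"
    proof (rule Janiszewski)
      show "compact S" unfolding S_def using cA by (simp add: compact_Int_closed)
      show "closed T" unfolding T_def by simp
      have "S \<inter> T = A \<inter> J" unfolding S_def T_def clin clout using Jo by blast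
      then show "connected (S \<inter> T)" using AJ d(1) by (simp add: connected_arc_image)
      show "connected_component (- S) z y0"
        by (rule connected_component_of_subset[OF ccA[OF z(1) y0C]]) (auto simp: S_def)
      have "- T = outside J" unfolding T_def clin using Jo by blast
      then show "connected_component (- T) z y0"
        using Jo z(2) y0(1) by (metis connected_component_def order_refl)
    qed
    moreover have "- (S \<union> T) \<subseteq> - B"
      unfolding S_def T_def clin clout B_def using J Jo by blast
    ultimately show ?thesis by (rule connected_component_of_subset)
  qed
  have x0B: "x0 \<in> - B"
  proof -
    have "x0 \<notin> J" using x0(1) inJ by blast
    then show ?thesis using x0C CA J unfolding B_def by blast
  qed
  have y0B: "y0 \<in> - B"
  proof -
    have "y0 \<notin> J" using y0(1) outJ by blast
    then show ?thesis using y0C CA J unfolding B_def by blast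
  qed
  have N: "\<not> connected_component (- B) x0 y0"
  proof
    assume "connected_component (- B) x0 y0"
    then obtain U where U: "connected U" "U \<subseteq> - B" "x0 \<in> U" "y0 \<in> U"
      by (auto simp: connected_component_def)
    have "U \<subseteq> inside J \<union> outside J" using U(2) JB Jo by blast
    moreover have "inside J \<inter> outside J \<inter> U = {}" using Jo by blast
    ultimately have "inside J \<inter> U = {} \<or> outside J \<inter> U = {}"
      using connectedD[OF U(1), of "inside J" "outside J"] Jo by blast
    then show False using U x0 y0 by blast
  qed
  have O: "connected_component_set (- B) w = connected_component_set (- A) w"
    if w: "w \<in> - A" "connected_component_set (- A) w \<noteq> C" for w
  proof
    show "connected_component_set (- B) w \<subseteq> connected_component_set (- A) w"
      using BA by (rule connected_component_mono)
    have disj: "connected_component_set (- A) w \<inter> C = {}"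
      unfolding C_def using w(2) C_def by (metis connected_component_nonoverlap)
    have "connected_component_set (- A) w \<subseteq> - B"
    proof
      fix z assume z: "z \<in> connected_component_set (- A) w"
      then have "z \<notin> A" using connected_component_subset by blast
      moreover have "z \<notin> C" using z disj by blast
      ultimately show "z \<in> - B" using gC pA' B_def by blast
    qed
    then show "connected_component_set (- A) w \<subseteq> connected_component_set (- B) w"
      using w(1) by (intro connected_component_maximal) auto
  qed
  define X where "X = connected_component_set (- B) x0"
  define Y where "Y = connected_component_set (- B) y0"
  have XY: "X \<noteq> Y" using N x0B unfolding X_def Y_def
    by (metis ComplD ComplI connected_component_eq_eq)
  have XC: "X \<subseteq> C" unfolding X_def C_def
    using connected_component_mono[OF BA, of x0] x0C C_def
    by (metis connected_component_eq mem_Collect_eq)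
  have YC: "Y \<subseteq> C" unfolding Y_def C_def
    using connected_component_mono[OF BA, of y0] y0C C_def
    by (metis connected_component_eq mem_Collect_eq)
  have "y0 \<notin> X" using N unfolding X_def by simp
  moreover have "x0 \<notin> Y" using N unfolding Y_def by (metis connected_component_sym mem_Collect_eq)
  ultimately have XnC: "X \<noteq> C" "Y \<noteq> C" using x0C y0C by auto
  have Cc: "C \<in> components (- A)" unfolding C_def using mA by (simp add: componentsI)
  have sub1: "components (- B) \<subseteq> (components (- A) - {C}) \<union> {X, Y}"
  proof
    fix D assume "D \<in> components (- B)"
    then obtain z where z: "z \<in> - B" "D = connected_component_set (- B) z"
      by (auto simp: components_def)
    have zA: "z \<in> - A" using z BA by auto
    show "D \<in> (components (- A) - {C}) \<union> {X, Y}"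
    proof (cases "connected_component_set (- A) z = C")
      case True
      then have zC: "z \<in> C" using zA by auto
      have "z \<notin> J" using z(1) JB by auto
      then have "z \<in> inside J \<or> z \<in> outside J" using Jo by blast
      then have "D = X \<or> D = Y"
        using Kin[OF zC] Kout[OF zC] z(2) unfolding X_def Y_def
        by (metis connected_component_eq mem_Collect_eq)
      then show ?thesis by auto
    next
      case False
      then have "D = connected_component_set (- A) z" using O zA z(2) by auto
      then show ?thesis using False zA by (auto simp: componentsI)
    qed
  qed
  have sub2: "(components (- A) - {C}) \<union> {X, Y} \<subseteq> components (- B)"
  proof -
    have "X \<in> components (- B)" "Y \<in> components (- B)"
      unfolding X_def Y_def using x0B y0B by (auto simp: componentsI)
    moreover have "D \<in> components (- B)" if DD: "D \<in> components (- A) - {C}" for D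
    proof -
      obtain w where w: "w \<in> - A" "D = connected_component_set (- A) w"
        using DD by (auto simp: components_def)
      then show ?thesis using O[of w] DD
        by (metis DiffE componentsI connected_component_eq_empty empty_iff insertCI
            connected_component_refl_eq mem_Collect_eq)
    qed
    ultimately show ?thesis by blast
  qed
  have eq: "components (- B) = (components (- A) - {C}) \<union> {X, Y}"
    using sub1 sub2 by blast
  have XYn: "X \<notin> components (- A) - {C}" "Y \<notin> components (- A) - {C}"
  proof -
    show "X \<notin> components (- A) - {C}"
    proof
      assume "X \<in> components (- A) - {C}"
      then have "X \<inter> C = {}" using Cc pairwise_disjoint_components unfolding pairwise_def by blast
      moreover have "x0 \<in> X" unfolding X_def using x0B by auto
      ultimately show False using x0C by blast
    qed
    show "Y \<notin> components (- A) - {C}"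
    proof
      assume "Y \<in> components (- A) - {C}"
      then have "Y \<inter> C = {}" using Cc pairwise_disjoint_components unfolding pairwise_def by blast
      moreover have "y0 \<in> Y" unfolding Y_def using y0B by auto
      ultimately show False using y0C by blast
    qed
  qed
  have "card (components (- B)) = card (components (- A) - {C}) + 2"
    unfolding eq using fin XY XYn by (simp add: card_insert_if)
  moreover have "card (components (- A) - {C}) + 1 = card (components (- A))"
    using fin Cc by (metis card_Diff1_le card_Suc_Diff1 Suc_eq_plus1)
  moreover have "finite (components (- B))" unfolding eq using fin by simp
  ultimately show ?thesis unfolding B_def by linarith
qed

lemma face_in_or_out:
  fixes c :: "real \<Rightarrow> complex"
  assumes sc: "simple_path c" "pathfinish c = pathstart c"
    and F: "F \<noteq> {}" "open F" "connected F" "F \<inter> path_image c = {}" "frontier F = path_image c"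
  shows "F = inside (path_image c) \<or> F = outside (path_image c)"
proof -
  let ?K = "path_image c"
  note Jo = Jordan_inside_outside[OF sc]
  have "F \<subseteq> inside ?K \<union> outside ?K" using F(4) Jo by blast
  then have "inside ?K \<inter> F = {} \<or> outside ?K \<inter> F = {}"
    using connectedD[OF F(3), of "inside ?K" "outside ?K"] Jo by blast
  then show ?thesis
  proof
    assume "inside ?K \<inter> F = {}"
    then have FO: "F \<subseteq> outside ?K" using \<open>F \<subseteq> _\<close> by blast
    have "outside ?K - F = {}"
    proof (rule ccontr)
      assume "outside ?K - F \<noteq> {}"
      moreover have "outside ?K \<inter> F \<noteq> {}" using FO F(1) by blast
      moreover have "connected (outside ?K)" using Jo by blast
      ultimately have "outside ?K \<inter> frontier F \<noteq> {}"
        using connected_Int_frontier by blast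
      then show False using F(5) Jo by blast
    qed
    then show ?thesis using FO by blast
  next
    assume "outside ?K \<inter> F = {}"
    then have FO: "F \<subseteq> inside ?K" using \<open>F \<subseteq> _\<close> by blast
    have "inside ?K - F = {}"
    proof (rule ccontr)
      assume "inside ?K - F \<noteq> {}"
      moreover have "inside ?K \<inter> F \<noteq> {}" using FO F(1) by blast
      moreover have "connected (inside ?K)" using Jo by blast
      ultimately have "inside ?K \<inter> frontier F \<noteq> {}"
        using connected_Int_frontier by blast
      then show False using F(5) Jo by blast
    qed
    then show ?thesis using FO by blast
  qed
qed

lemma two_faces:
  fixes c :: "real \<Rightarrow> complex"
  assumes sc: "simple_path c" "pathfinish c = pathstart c"
    and F1: "F1 \<noteq> {}" "open F1" "connected F1" "F1 \<inter> path_image c = {}" "frontier F1 = path_image c"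
    and F2: "F2 \<noteq> {}" "open F2" "connected F2" "F2 \<inter> path_image c = {}" "frontier F2 = path_image c"
    and ne: "F1 \<noteq> F2"
  shows "- path_image c \<subseteq> F1 \<union> F2"
  using face_in_or_out[OF sc F1] face_in_or_out[OF sc F2] ne Jordan_inside_outside[OF sc] by blast

lemma orient_arc:
  fixes g :: "real \<Rightarrow> complex"
  assumes "arc g" "{pathstart g, pathfinish g} = {x, y}" "x \<noteq> y"
  shows "\<exists>h. arc h \<and> pathstart h = x \<and> pathfinish h = y \<and> path_image h = path_image g"
proof (cases "pathstart g = x")
  case True
  then show ?thesis using assms by (intro exI[of _ g]) (auto simp: doubleton_eq_iff)
next
  case False
  then show ?thesis using assms
    by (intro exI[of _ "reversepath g"]) (auto simp: doubleton_eq_iff arc_reversepath)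
qed

lemma tri_curve:
  fixes g1 g2 g3 :: "real \<Rightarrow> complex"
  assumes arcs: "arc g1" "arc g2" "arc g3" and dist: "a \<noteq> b" "b \<noteq> c" "a \<noteq> c"
    and e1: "{pathstart g1, pathfinish g1} = {a, b}"
    and e2: "{pathstart g2, pathfinish g2} = {b, c}"
    and e3: "{pathstart g3, pathfinish g3} = {c, a}"
    and i12: "path_image g1 \<inter> path_image g2 \<subseteq> {b}"
    and i23: "path_image g2 \<inter> path_image g3 \<subseteq> {c}"
    and i13: "path_image g1 \<inter> path_image g3 \<subseteq> {a}"
  shows "\<exists>k. simple_path k \<and> pathfinish k = pathstart k \<and>
           path_image k = path_image g1 \<union> path_image g2 \<union> path_image g3"
proof -
  obtain h1 where h1: "arc h1" "pathstart h1 = a" "pathfinish h1 = b" "path_image h1 = path_image g1"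
    using orient_arc[OF arcs(1) e1 dist(1)] by blast
  obtain h2 where h2: "arc h2" "pathstart h2 = b" "pathfinish h2 = c" "path_image h2 = path_image g2"
    using orient_arc[OF arcs(2) e2 dist(2)] by blast
  obtain h3 where h3: "arc h3" "pathstart h3 = c" "pathfinish h3 = a" "path_image h3 = path_image g3"
    using orient_arc[OF arcs(3) e3] dist(3) by metis
  have a23: "arc (h2 +++ h3)" using h2 h3 i23 by (intro arc_join) auto
  have pi23: "path_image (h2 +++ h3) = path_image g2 \<union> path_image g3"
    using h2 h3 by (simp add: path_image_join)
  have "simple_path (h1 +++ (h2 +++ h3))"
    using simple_path_join_loop_eq[of "h2 +++ h3" h1] a23 h1 h2 h3 pi23 i12 i13 by auto
  moreover have "pathfinish (h1 +++ (h2 +++ h3)) = pathstart (h1 +++ (h2 +++ h3))"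
    using h1 h3 by simp
  moreover have "path_image (h1 +++ (h2 +++ h3)) = path_image g1 \<union> path_image g2 \<union> path_image g3"
    using h1 h2 pi23 by (simp add: path_image_join Un_assoc)
  ultimately show ?thesis by blast
qed

lemma rtranclp_cross:
  assumes "r\<^sup>*\<^sup>* a b" "a \<in> W" "b \<notin> W"
  shows "\<exists>x y. r x y \<and> x \<in> W \<and> y \<notin> W"
  using assms
proof (induction rule: rtranclp_induct)
  case base then show ?case by simp
next
  case (step b c)
  then show ?case by (cases "b \<in> W") auto
qed

definition Dr :: "('v \<Rightarrow> complex) \<Rightarrow> ('v set \<Rightarrow> real \<Rightarrow> complex) \<Rightarrow> 'v set \<Rightarrow> 'v set set \<Rightarrow> complex set" where
  "Dr pos \<gamma> W F = pos ` W \<union> (\<Union>e\<in>F. path_image (\<gamma> e))"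

locale pgraph =
  fixes V :: "'v set" and E :: "'v set set"
    and pos :: "'v \<Rightarrow> complex" and \<gamma> :: "'v set \<Rightarrow> real \<Rightarrow> complex"
  assumes sg: "simple_graph V E" and emb: "plane_embedding V E pos \<gamma>"
begin

lemma finV: "finite V" using sg by (simp add: simple_graph_def)

lemma edge: "e \<in> E \<Longrightarrow> \<exists>x y. e = {x, y} \<and> x \<noteq> y \<and> x \<in> V \<and> y \<in> V"
  using sg unfolding simple_graph_def by (metis card_2_iff insert_subset)

lemma edge_sub: "e \<in> E \<Longrightarrow> e \<subseteq> V"
  using sg unfolding simple_graph_def by blast

lemma finE: "finite E"
proof -
  have "E \<subseteq> Pow V" using edge_sub by blast
  then show ?thesis using finV by (meson finite_Pow_iff finite_subset)
qed

lemma arc_e: "e \<in> E \<Longrightarrow> arc (\<gamma> e)"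
  using emb by (simp add: plane_embedding_def)

lemma ends_e: "e \<in> E \<Longrightarrow> {pathstart (\<gamma> e), pathfinish (\<gamma> e)} = pos ` e"
  using emb by (simp add: plane_embedding_def)

lemma vert_e: "e \<in> E \<Longrightarrow> v \<in> V \<Longrightarrow> pos v \<in> path_image (\<gamma> e) \<Longrightarrow> v \<in> e"
  using emb by (simp add: plane_embedding_def)

lemma int_e: "e \<in> E \<Longrightarrow> e' \<in> E \<Longrightarrow> e \<noteq> e' \<Longrightarrow>
    path_image (\<gamma> e) \<inter> path_image (\<gamma> e') \<subseteq> pos ` (e \<inter> e')"
  using emb by (simp add: plane_embedding_def)

lemma pos_in_e: "e \<in> E \<Longrightarrow> v \<in> e \<Longrightarrow> pos v \<in> path_image (\<gamma> e)"
  using ends_e[of e] by (metis imageI insertCI pathfinish_in_path_image pathstart_in_path_image insertE empty_iff)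

lemma Dr_int:
  assumes W: "W \<subseteq> V" and F: "F \<subseteq> E" "\<forall>e'\<in>F. e' \<subseteq> W" and e: "e \<in> E" "e \<notin> F"
  shows "Dr pos \<gamma> W F \<inter> path_image (\<gamma> e) = pos ` (e \<inter> W)"
proof
  show "pos ` (e \<inter> W) \<subseteq> Dr pos \<gamma> W F \<inter> path_image (\<gamma> e)"
    using pos_in_e[OF e(1)] by (auto simp: Dr_def)
  show "Dr pos \<gamma> W F \<inter> path_image (\<gamma> e) \<subseteq> pos ` (e \<inter> W)"
  proof
    fix z assume z: "z \<in> Dr pos \<gamma> W F \<inter> path_image (\<gamma> e)"
    then have ze: "z \<in> path_image (\<gamma> e)" by blast
    from z consider (a) u where "u \<in> W" "z = pos u" | (b) e' where "e' \<in> F" "z \<in> path_image (\<gamma> e')"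
      by (auto simp: Dr_def)
    then show "z \<in> pos ` (e \<inter> W)"
    proof cases
      case a
      then have "u \<in> e" using vert_e[OF e(1)] W ze by blast
      then show ?thesis using a by blast
    next
      case b
      have "e \<noteq> e'" using b e by auto
      then have "z \<in> pos ` (e \<inter> e')" using int_e[OF e(1)] b F ze by blast
      then show ?thesis using b F by blast
    qed
  qed
qed

lemma Dr_insert: "e \<in> E \<Longrightarrow> e \<subseteq> insert y W \<Longrightarrow> y \<in> e \<Longrightarrow>
   Dr pos \<gamma> (insert y W) (insert e F) = Dr pos \<gamma> W F \<union> path_image (\<gamma> e)"
  using pos_in_e[of e y] by (auto simp: Dr_def)

lemma Dr_insert2: "Dr pos \<gamma> W (insert e F) = Dr pos \<gamma> W F \<union> path_image (\<gamma> e)"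
  by (auto simp: Dr_def)

lemma tree_phase:
  assumes conn: "graph_connected V E" and v0: "v0 \<in> V"
  shows "n < card V \<Longrightarrow> \<exists>W F. v0 \<in> W \<and> W \<subseteq> V \<and> F \<subseteq> E \<and> (\<forall>e\<in>F. e \<subseteq> W) \<and>
     card W = Suc n \<and> card F = n \<and> compact (Dr pos \<gamma> W F) \<and> path_connected (Dr pos \<gamma> W F)
     \<and> connected (- Dr pos \<gamma> W F)"
proof (induction n)
  case 0
  have D: "Dr pos \<gamma> {v0} {} = {pos v0}" by (simp add: Dr_def)
  show ?case
    apply (rule exI[of _ "{v0}"], rule exI[of _ "{}"])
    using v0 D path_connected_punctured_universe[of "pos v0"]
    by (simp add: path_connected_imp_connected)
next
  case (Suc n)
  then obtain W F where WF: "v0 \<in> W" "W \<subseteq> V" "F \<subseteq> E" "\<forall>e\<in>F. e \<subseteq> W"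
     "card W = Suc n" "card F = n" "compact (Dr pos \<gamma> W F)" "path_connected (Dr pos \<gamma> W F)"
     "connected (- Dr pos \<gamma> W F)" by auto
  have "W \<noteq> V" using WF(5) Suc.prems by auto
  then obtain u where u: "u \<in> V" "u \<notin> W" using WF(2) by blast
  have "(adj E)\<^sup>*\<^sup>* v0 u" using conn v0 u unfolding graph_connected_def by blast
  then obtain x y where xy: "adj E x y" "x \<in> W" "y \<notin> W"
    using rtranclp_cross[of "adj E" v0 u W] WF(1) u by blast
  define e where "e = {x, y}"
  have eE: "e \<in> E" using xy by (simp add: adj_def e_def)
  have yV: "y \<in> V" using edge_sub[OF eE] e_def by auto
  have eF: "e \<notin> F" using WF(4) xy e_def by auto
  have finF: "finite F" using WF(3) finE finite_subset by blast
  have finW: "finite W" using WF(2) finV finite_subset by blast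
  have xny: "x \<noteq> y" using xy by auto
  have int: "Dr pos \<gamma> W F \<inter> path_image (\<gamma> e) = {pos x}"
  proof -
    have "e \<inter> W = {x}" using xy e_def by auto
    then show ?thesis using Dr_int[OF WF(2) WF(3) WF(4) eE eF] by simp
  qed
  have DI: "Dr pos \<gamma> (insert y W) (insert e F) = Dr pos \<gamma> W F \<union> path_image (\<gamma> e)"
    by (rule Dr_insert[OF eE]) (use xy e_def in auto)
  show ?case
  proof (rule exI[of _ "insert y W"], rule exI[of _ "insert e F"], intro conjI)
    show "v0 \<in> insert y W" "insert y W \<subseteq> V" "insert e F \<subseteq> E"
      using WF yV eE by auto
    show "\<forall>e'\<in>insert e F. e' \<subseteq> insert y W" using WF(4) xy e_def by auto
    show "card (insert y W) = Suc (Suc n)" using finW xy WF(5) by simp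
    show "card (insert e F) = Suc n" using finF eF WF(6) by simp
    show "compact (Dr pos \<gamma> (insert y W) (insert e F))"
      unfolding DI using WF(7) arc_e[OF eE] by (simp add: compact_Un compact_arc_image)
    show "path_connected (Dr pos \<gamma> (insert y W) (insert e F))"
      unfolding DI using WF(8) arc_e[OF eE] int
      by (intro path_connected_Un) (auto simp: path_connected_path_image arc_imp_path)
    show "connected (- Dr pos \<gamma> (insert y W) (insert e F))"
      unfolding DI using pendant_step[OF WF(7) WF(9) arc_e[OF eE] int] .
  qed
qed

lemma faces_eq: "faces V E pos \<gamma> = components (- Dr pos \<gamma> V E)"
  by (auto simp: faces_def components_def drawing_def Dr_def)

lemma euler_lb:
  assumes conn: "graph_connected V E"
  shows "finite (faces V E pos \<gamma>) \<and> card E + 2 \<le> card (faces V E pos \<gamma>) + card V"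
proof -
  obtain v0 where v0: "v0 \<in> V" using conn by (auto simp: graph_connected_def)
  have cV: "card V > 0" using v0 finV card_gt_0_iff by blast
  obtain W F where WF: "v0 \<in> W" "W \<subseteq> V" "F \<subseteq> E" "\<forall>e\<in>F. e \<subseteq> W"
     "card W = Suc (card V - 1)" "card F = card V - 1" "compact (Dr pos \<gamma> W F)" "path_connected (Dr pos \<gamma> W F)"
     "connected (- Dr pos \<gamma> W F)"
    using tree_phase[OF conn v0, of "card V - 1"] cV by auto
  have WV: "W = V" using WF(2,5) cV finV by (metis Suc_diff_1 card_subset_eq)
  have finF: "finite F" using WF(3) finE finite_subset by blast
  let ?P = "\<lambda>R. finite (components (- Dr pos \<gamma> V (F \<union> R))) \<and>
      card R + 1 \<le> card (components (- Dr pos \<gamma> V (F \<union> R))) \<and>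
      compact (Dr pos \<gamma> V (F \<union> R)) \<and> path_connected (Dr pos \<gamma> V (F \<union> R))"
  have fin2: "finite (E - F)" using finE by simp
  have "?P (E - F)"
    using fin2 subset_refl
  proof (induction rule: finite_subset_induct')
    case empty
    have "- Dr pos \<gamma> V F \<noteq> {}"
    proof
      assume "- Dr pos \<gamma> V F = {}"
      then have "Dr pos \<gamma> V F = UNIV" by auto
      then show False using WF(7) WV compact_imp_bounded not_bounded_UNIV by metis
    qed
    then have "components (- Dr pos \<gamma> V F) = {- Dr pos \<gamma> V F}"
      using WF(9) WV by (simp add: components_eq_sing_iff)
    then show ?case using WF WV by simp
  next
    case (insert a R)
    have aE: "a \<in> E" "a \<notin> F \<union> R" using insert by auto
    have sub: "F \<union> R \<subseteq> E" "\<forall>e'\<in>F \<union> R. e' \<subseteq> V" using insert WF(3) edge_sub by auto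
    have int: "Dr pos \<gamma> V (F \<union> R) \<inter> path_image (\<gamma> a) = {pathstart (\<gamma> a), pathfinish (\<gamma> a)}"
      using Dr_int[OF subset_refl sub aE] ends_e[OF aE(1)] edge_sub[OF aE(1)]
      by (simp add: Int_absorb2)
    have DI: "Dr pos \<gamma> V (F \<union> insert a R) = Dr pos \<gamma> V (F \<union> R) \<union> path_image (\<gamma> a)"
      using Dr_insert2[of V a "F \<union> R"] by simp
    have IH: "?P R" using insert by blast
    have cs: "finite (components (- Dr pos \<gamma> V (F \<union> insert a R))) \<and>
       card (components (- Dr pos \<gamma> V (F \<union> R))) + 1 \<le> card (components (- Dr pos \<gamma> V (F \<union> insert a R)))"
      unfolding DI using closing_step[OF _ _ arc_e[OF aE(1)] int] IH by blast
    show ?case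
    proof (intro conjI)
      show "finite (components (- Dr pos \<gamma> V (F \<union> insert a R)))" using cs by blast
      show "card (insert a R) + 1 \<le> card (components (- Dr pos \<gamma> V (F \<union> insert a R)))"
        using cs IH insert by simp
      show "compact (Dr pos \<gamma> V (F \<union> insert a R))"
        unfolding DI using IH arc_e[OF aE(1)] by (simp add: compact_Un compact_arc_image)
      show "path_connected (Dr pos \<gamma> V (F \<union> insert a R))"
        unfolding DI using IH arc_e[OF aE(1)] int
        by (intro path_connected_Un) (auto simp: path_connected_path_image arc_imp_path)
    qed
  qed
  moreover have "F \<union> (E - F) = E" using WF(3) by blast
  moreover have "card (E - F) = card E - card F" using finF WF(3) by (simp add: card_Diff_subset)
  moreover have "card F \<le> card E" using WF(3) finE card_mono by blast
  ultimately show ?thesis unfolding faces_eq using WF(6) cV by auto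
qed

lemma closed_Dr: "closed (Dr pos \<gamma> V E)"
proof -
  have "closed (pos ` V)" using finV by (simp add: finite_imp_closed)
  moreover have "closed (\<Union>e\<in>E. path_image (\<gamma> e))"
    using finE arc_e by (intro closed_UN) (auto simp: closed_arc_image)
  ultimately show ?thesis unfolding Dr_def by (simp add: closed_Un)
qed

lemma pair_sub3:
  assumes "{x, y} \<subseteq> {a, b, c}" "x \<noteq> y"
  shows "{x, y} = {a, b} \<or> {x, y} = {b, c} \<or> {x, y} = {a, c}"
proof -
  have "x \<in> {a, b, c}" "y \<in> {a, b, c}" using assms by auto
  then show ?thesis using assms(2) by (auto simp: insert_commute)
qed

lemma tri_edges:
  assumes "is_triangle E T"
  shows "\<exists>a b c. T = {a, b, c} \<and> a \<noteq> b \<and> b \<noteq> c \<and> a \<noteq> c \<and> {a, b} \<in> E \<and> {b, c} \<in> E \<and> {a, c} \<in> E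
     \<and> {e \<in> E. e \<subseteq> T} = {{a, b}, {b, c}, {a, c}}"
proof -
  obtain a b c where abc: "T = {a, b, c}" "a \<noteq> b" "b \<noteq> c" "a \<noteq> c" "{a, b} \<in> E" "{b, c} \<in> E" "{a, c} \<in> E"
    using assms unfolding is_triangle_def by blast
  have "{e \<in> E. e \<subseteq> T} \<subseteq> {{a, b}, {b, c}, {a, c}}"
  proof
    fix e assume e: "e \<in> {e \<in> E. e \<subseteq> T}"
    then have eE: "e \<in> E" "e \<subseteq> T" by auto
    obtain x y where "e = {x, y}" "x \<noteq> y" using edge[OF eE(1)] by blast
    then show "e \<in> {{a, b}, {b, c}, {a, c}}" using abc(1) eE(2) pair_sub3[of x y a b c] by auto
  qed
  moreover have "{{a, b}, {b, c}, {a, c}} \<subseteq> {e \<in> E. e \<subseteq> T}" using abc by auto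
  ultimately show ?thesis using abc by blast
qed

lemma trif_char:
  assumes "triangular_face E pos \<gamma> F"
  shows "\<exists>T. is_triangle E T \<and> frontier F = (\<Union>e\<in>{e \<in> E. e \<subseteq> T}. path_image (\<gamma> e))"
proof -
  obtain a b c where abc: "a \<noteq> b" "b \<noteq> c" "a \<noteq> c" "{a, b} \<in> E" "{b, c} \<in> E" "{a, c} \<in> E"
     "frontier F = path_image (\<gamma> {a, b}) \<union> path_image (\<gamma> {b, c}) \<union> path_image (\<gamma> {a, c})"
    using assms unfolding triangular_face_def by blast
  have T: "is_triangle E {a, b, c}" unfolding is_triangle_def using abc by blast
  obtain a' b' c' where "{a, b, c} = {a', b', c'}" and
    ee: "{e \<in> E. e \<subseteq> {a, b, c}} = {{a', b'}, {b', c'}, {a', c'}}"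
    using tri_edges[OF T] by blast
  have "{e \<in> E. e \<subseteq> {a, b, c}} = {{a, b}, {b, c}, {a, c}}"
  proof
    show "{{a, b}, {b, c}, {a, c}} \<subseteq> {e \<in> E. e \<subseteq> {a, b, c}}" using abc by auto
    show "{e \<in> E. e \<subseteq> {a, b, c}} \<subseteq> {{a, b}, {b, c}, {a, c}}"
    proof
      fix e assume e: "e \<in> {e \<in> E. e \<subseteq> {a, b, c}}"
      then have eE: "e \<in> E" "e \<subseteq> {a, b, c}" by auto
      obtain x y where "e = {x, y}" "x \<noteq> y" using edge[OF eE(1)] by blast
      then show "e \<in> {{a, b}, {b, c}, {a, c}}" using eE(2) pair_sub3[of x y a b c] by auto
    qed
  qed
  then show ?thesis using T abc(7) by (intro exI[of _ "{a, b, c}"]) auto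
qed

lemma tri_face_unique:
  assumes md: "min_degree_ge V E 3" and T: "is_triangle E T"
    and F1: "F1 \<in> faces V E pos \<gamma>" and F2: "F2 \<in> faces V E pos \<gamma>"
    and fr1: "frontier F1 = (\<Union>e\<in>{e \<in> E. e \<subseteq> T}. path_image (\<gamma> e))"
    and fr2: "frontier F2 = (\<Union>e\<in>{e \<in> E. e \<subseteq> T}. path_image (\<gamma> e))"
  shows "F1 = F2"
proof (rule ccontr)
  assume ne: "F1 \<noteq> F2"
  obtain a b c where abc: "T = {a, b, c}" "a \<noteq> b" "b \<noteq> c" "a \<noteq> c" "{a, b} \<in> E" "{b, c} \<in> E" "{a, c} \<in> E"
     and ee: "{e \<in> E. e \<subseteq> T} = {{a, b}, {b, c}, {a, c}}"
    using tri_edges[OF T] by blast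
  let ?K = "path_image (\<gamma> {a, b}) \<union> path_image (\<gamma> {b, c}) \<union> path_image (\<gamma> {c, a})"
  have KK: "(\<Union>e\<in>{e \<in> E. e \<subseteq> T}. path_image (\<gamma> e)) = ?K"
    unfolding ee by (auto simp: insert_commute)
  have V3: "a \<in> V" "b \<in> V" "c \<in> V" using abc edge_sub by auto
  have injp: "inj_on pos V" using emb by (simp add: plane_embedding_def)
  have pd: "pos a \<noteq> pos b" "pos b \<noteq> pos c" "pos a \<noteq> pos c"
    using injp V3 abc by (metis inj_on_contraD)+
  have ca: "{c, a} \<in> E" using abc by (simp add: insert_commute)
  have i12: "path_image (\<gamma> {a, b}) \<inter> path_image (\<gamma> {b, c}) \<subseteq> {pos b}"
    using int_e[OF abc(5) abc(6)] abc by (auto simp: doubleton_eq_iff)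
  have i23: "path_image (\<gamma> {b, c}) \<inter> path_image (\<gamma> {c, a}) \<subseteq> {pos c}"
    using int_e[OF abc(6) ca] abc by (auto simp: doubleton_eq_iff)
  have i13: "path_image (\<gamma> {a, b}) \<inter> path_image (\<gamma> {c, a}) \<subseteq> {pos a}"
    using int_e[OF abc(5) ca] abc by (auto simp: doubleton_eq_iff)
  obtain k where k: "simple_path k" "pathfinish k = pathstart k" "path_image k = ?K"
    using tri_curve[OF arc_e[OF abc(5)] arc_e[OF abc(6)] arc_e[OF ca] pd
        _ _ _ i12 i23 i13] ends_e[OF abc(5)] ends_e[OF abc(6)] ends_e[OF ca] by auto
  let ?D = "Dr pos \<gamma> V E"
  have oD: "open (- ?D)" using closed_Dr by (simp add: open_Compl)
  have KD: "?K \<subseteq> ?D" using abc(5,6) ca unfolding Dr_def by blast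
  have face_props: "G \<noteq> {} \<and> open G \<and> connected G \<and> G \<subseteq> - ?D" if GG: "G \<in> faces V E pos \<gamma>" for G
  proof -
    obtain x where x: "x \<in> - ?D" "G = connected_component_set (- ?D) x"
      using GG unfolding faces_eq by (auto simp: components_def)
    then show ?thesis using open_connected_component[OF oD] connected_component_subset
      by (metis connected_component_eq_empty connected_connected_component ComplD)
  qed
  have p1: "F1 \<noteq> {}" "open F1" "connected F1" "F1 \<subseteq> - ?D" using face_props[OF F1] by auto
  have p2: "F2 \<noteq> {}" "open F2" "connected F2" "F2 \<subseteq> - ?D" using face_props[OF F2] by auto
  have "- path_image k \<subseteq> F1 \<union> F2"
  proof (rule two_faces[OF k(1,2) p1(1-3) _ _ p2(1-3) _ _ ne])
    show "F1 \<inter> path_image k = {}" "F2 \<inter> path_image k = {}"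
      unfolding k(3) using p1(4) p2(4) KD by blast+
    show "frontier F1 = path_image k" "frontier F2 = path_image k"
      unfolding k(3) fr1 fr2 KK by simp_all
  qed
  then have "- ?K \<subseteq> F1 \<union> F2" unfolding k(3) .
  moreover have "(F1 \<union> F2) \<inter> ?D = {}" using face_props[OF F1] face_props[OF F2] by blast
  ultimately have DK: "?D \<subseteq> ?K" by blast
  have VT: "V \<subseteq> {a, b, c}"
  proof
    fix v assume v: "v \<in> V"
    then have "pos v \<in> ?K" using DK unfolding Dr_def by blast
    then show "v \<in> {a, b, c}" using vert_e[OF abc(5) v] vert_e[OF abc(6) v] vert_e[OF ca v] by blast
  qed
  have "{e \<in> E. a \<in> e} \<subseteq> {{a, b}, {a, c}}"
  proof
    fix e assume e: "e \<in> {e \<in> E. a \<in> e}"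
    then have eE: "e \<in> E" "a \<in> e" by auto
    obtain x y where xy: "e = {x, y}" "x \<noteq> y" "x \<in> V" "y \<in> V" using edge[OF eE(1)] by blast
    then have "x \<in> {a, b, c}" "y \<in> {a, b, c}" using VT by auto
    then show "e \<in> {{a, b}, {a, c}}" using xy eE(2) by (auto simp: insert_commute)
  qed
  then have "degree E a \<le> card {{a, b}, {a, c}}" unfolding degree_def
    by (intro card_mono) auto
  also have "\<dots> \<le> 2" by (simp add: card_insert_if)
  finally have "degree E a \<le> 2" .
  moreover have "degree E a \<ge> 3" using md V3 by (simp add: min_degree_ge_def)
  ultimately show False by simp
qed

lemma tri_sub: "is_triangle E T \<Longrightarrow> T \<subseteq> V"
  using tri_edges edge_sub by blast

lemma finTri: "finite {T. is_triangle E T}"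
proof -
  have "{T. is_triangle E T} \<subseteq> Pow V" using tri_sub by blast
  then show ?thesis using finV by (meson finite_Pow_iff finite_subset)
qed

lemma card_tri: "is_triangle E T \<Longrightarrow> card T = 3"
  unfolding is_triangle_def by auto

lemma card_edge: "e \<in> E \<Longrightarrow> card e = 2"
  using sg by (simp add: simple_graph_def)

lemma tri_at_v:
  assumes T: "is_triangle E T" and v: "v \<in> T"
  shows "card {e \<in> E. v \<in> e \<and> e \<subseteq> T} = 2"
proof -
  obtain a b c where abc: "T = {a, b, c}" "a \<noteq> b" "b \<noteq> c" "a \<noteq> c"
     and ee: "{e \<in> E. e \<subseteq> T} = {{a, b}, {b, c}, {a, c}}"
    using tri_edges[OF T] by blast
  have "{e \<in> E. v \<in> e \<and> e \<subseteq> T} = {e \<in> {e \<in> E. e \<subseteq> T}. v \<in> e}" by auto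
  also have "\<dots> = {e \<in> {{a, b}, {b, c}, {a, c}}. v \<in> e}" unfolding ee ..
  finally have eq: "{e \<in> E. v \<in> e \<and> e \<subseteq> T} = {e \<in> {{a, b}, {b, c}, {a, c}}. v \<in> e}" .
  from v abc(1) consider "v = a" | "v = b" | "v = c" by blast
  then show ?thesis
  proof cases
    case 1
    then have "{e \<in> {{a, b}, {b, c}, {a, c}}. v \<in> e} = {{a, b}, {a, c}}" using abc by auto
    then show ?thesis using eq abc by (simp add: doubleton_eq_iff)
  next
    case 2
    then have "{e \<in> {{a, b}, {b, c}, {a, c}}. v \<in> e} = {{a, b}, {b, c}}" using abc by auto
    then show ?thesis using eq abc by (simp add: doubleton_eq_iff)
  next
    case 3
    then have "{e \<in> {{a, b}, {b, c}, {a, c}}. v \<in> e} = {{b, c}, {a, c}}" using abc by auto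
    then show ?thesis using eq abc by (simp add: doubleton_eq_iff)
  qed
qed

lemma tri_deg:
  assumes nes: "no_edge_sharing_triangles E" and v: "v \<in> V"
  shows "2 * card {T \<in> {T. is_triangle E T}. v \<in> T} \<le> degree E v"
proof -
  let ?I = "{T \<in> {T. is_triangle E T}. v \<in> T}"
  let ?S = "\<lambda>T. {e \<in> E. v \<in> e \<and> e \<subseteq> T}"
  have finI: "finite ?I" using finTri by simp
  have "card (\<Union>T\<in>?I. ?S T) = (\<Sum>T\<in>?I. card (?S T))"
  proof (rule card_UN_disjoint[OF finI])
    show "\<forall>T\<in>?I. finite (?S T)" using finE by simp
    show "\<forall>T1\<in>?I. \<forall>T2\<in>?I. T1 \<noteq> T2 \<longrightarrow> ?S T1 \<inter> ?S T2 = {}"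
      using nes unfolding no_edge_sharing_triangles_def by blast
  qed
  also have "\<dots> = (\<Sum>T\<in>?I. 2)" using tri_at_v by (intro sum.cong) auto
  also have "\<dots> = 2 * card ?I" by simp
  finally have eq: "card (\<Union>T\<in>?I. ?S T) = 2 * card ?I" .
  have "card (\<Union>T\<in>?I. ?S T) \<le> degree E v" unfolding degree_def
    using finE by (intro card_mono) auto
  then show ?thesis using eq by simp
qed

lemma double_count:
  fixes X :: "'v set set"
  assumes "finite X" "\<And>T. T \<in> X \<Longrightarrow> T \<subseteq> V"
  shows "(\<Sum>v\<in>V. card {T \<in> X. v \<in> T}) = (\<Sum>T\<in>X. card T)"
proof -
  have "(\<Sum>v\<in>V. card {T \<in> X. v \<in> T}) = (\<Sum>v\<in>V. \<Sum>T\<in>X. if v \<in> T then 1 else 0)"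
    using assms(1) by (intro sum.cong refl) (simp add: sum.If_cases Int_def)
  also have "\<dots> = (\<Sum>T\<in>X. \<Sum>v\<in>V. if v \<in> T then 1 else 0)" by (rule sum.swap)
  also have "\<dots> = (\<Sum>T\<in>X. card T)"
  proof (intro sum.cong refl)
    fix T assume "T \<in> X"
    then have "V \<inter> T = T" using assms(2) by blast
    then show "(\<Sum>v\<in>V. if v \<in> T then 1 else 0) = card T"
      using finV by (simp add: sum.If_cases)
  qed
  finally show ?thesis .
qed

lemma comb:
  assumes md: "min_degree_ge V E 3" and nes: "no_edge_sharing_triangles E"
  shows "3 * card {T. is_triangle E T} + 2 * card V \<le> 2 * card E"
proof -
  let ?Tri = "{T. is_triangle E T}"
  have h1: "(\<Sum>v\<in>V. card {T \<in> ?Tri. v \<in> T}) = 3 * card ?Tri"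
    using double_count[OF finTri] tri_sub card_tri by simp
  have h2: "(\<Sum>v\<in>V. degree E v) = 2 * card E"
    using double_count[OF finE] edge_sub card_edge unfolding degree_def by simp
  have s: "(\<Sum>v\<in>V. card {T \<in> ?Tri. v \<in> T} + 2) = (\<Sum>v\<in>V. card {T \<in> ?Tri. v \<in> T}) + 2 * card V"
    by (simp only: sum.distrib) simp
  have "(\<Sum>v\<in>V. card {T \<in> ?Tri. v \<in> T} + 2) \<le> (\<Sum>v\<in>V. degree E v)"
  proof (rule sum_mono)
    fix v assume v: "v \<in> V"
    have "2 * card {T \<in> ?Tri. v \<in> T} \<le> degree E v" by (rule tri_deg[OF nes v])
    moreover have "3 \<le> degree E v" using md v by (simp add: min_degree_ge_def)
    ultimately show "card {T \<in> ?Tri. v \<in> T} + 2 \<le> degree E v" by linarith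
  qed
  then show ?thesis using h1 h2 s by linarith
qed

end

theorem theorem4:
  fixes V :: "'v set" and E :: "'v set set"
    and pos :: "'v \<Rightarrow> complex" and \<gamma> :: "'v set \<Rightarrow> real \<Rightarrow> complex"
  assumes "simple_graph V E"
    and "graph_connected V E"
    and "min_degree_ge V E 3"
    and "no_edge_sharing_triangles E"
    and "plane_embedding V E pos \<gamma>"
  shows "real (card {F \<in> faces V E pos \<gamma>. triangular_face E pos \<gamma> F})
           < 2 / 3 * real (card (faces V E pos \<gamma>))"
proof -
  interpret pgraph V E pos \<gamma> using assms(1,5) by unfold_locales
  have eu: "finite (faces V E pos \<gamma>)" "card E + 2 \<le> card (faces V E pos \<gamma>) + card V"
    using euler_lb[OF assms(2)] by auto
  have cb: "3 * card {T. is_triangle E T} + 2 * card V \<le> 2 * card E"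
    using comb[OF assms(3,4)] .
  let ?TF = "{F \<in> faces V E pos \<gamma>. triangular_face E pos \<gamma> F}"
  let ?K = "\<lambda>T. (\<Union>e\<in>{e \<in> E. e \<subseteq> T}. path_image (\<gamma> e))"
  define \<tau> where "\<tau> F = (SOME T. is_triangle E T \<and> frontier F = ?K T)" for F
  have \<tau>: "is_triangle E (\<tau> F) \<and> frontier F = ?K (\<tau> F)" if FF: "F \<in> ?TF" for F
  proof -
    have "triangular_face E pos \<gamma> F" using FF by simp
    then have "\<exists>T. is_triangle E T \<and> frontier F = ?K T" by (rule trif_char)
    then show ?thesis unfolding \<tau>_def by (rule someI_ex)
  qed
  have "inj_on \<tau> ?TF"
  proof (rule inj_onI)
    fix F1 F2 assume F: "F1 \<in> ?TF" "F2 \<in> ?TF" "\<tau> F1 = \<tau> F2"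
    show "F1 = F2"
      using tri_face_unique[OF assms(3), of "\<tau> F1" F1 F2] \<tau>[OF F(1)] \<tau>[OF F(2)] F by auto
  qed
  moreover have "\<tau> ` ?TF \<subseteq> {T. is_triangle E T}" using \<tau> by blast
  ultimately have "card ?TF \<le> card {T. is_triangle E T}"
    using finTri card_inj_on_le by blast
  then have "3 * card ?TF < 2 * card (faces V E pos \<gamma>)" using eu cb by linarith
  then have "3 * real (card ?TF) < 2 * real (card (faces V E pos \<gamma>))" by linarith
  then show ?thesis by simp
qed

end
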